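(* Let $X$ be a connected finite $T_0$-space and let $x_0,x\in X$ with $x_0\neq x$, such that $x$ is neither a maximal nor a minimal element of $X$. Then the inclusion of simplicial complexes $\mathcal{K}(X\smallsetminus\{x\})\subseteq\mathcal{K}(X)$ induces an epimorphism $i_*:E(\mathcal{K}(X\smallsetminus\{x\}),x_0)\to E(\mathcal{K}(X),x_0)$ of edge-path groups.
   Context: Finite $T_0$-spaces are identified with finite posets via $x\le y$ iff $x$ lies in every open set containing $y$. For a finite poset $P$, $\mathcal{K}(P)$ is the simplicial complex whose simplices are the nonempty chains of $P$. $E(K,v)$ denotes the edge-path group of a simplicial complex $K$ with base vertex $v$. *)

theory Defs
  imports "HOL-Analysis.Analysis" "HOL-Algebra.Group"
begin

definition spec_le :: "'a topology \<Rightarrow> 'a \<Rightarrow> 'a \<Rightarrow> bool" where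
  "spec_le X x y \<longleftrightarrow> x \<in> topspace X \<and> y \<in> topspace X \<and>
     (\<forall>U. openin X U \<and> y \<in> U \<longrightarrow> x \<in> U)"

definition is_maximal_pt :: "'a topology \<Rightarrow> 'a \<Rightarrow> bool" where
  "is_maximal_pt X x \<longleftrightarrow> x \<in> topspace X \<and> (\<forall>y. spec_le X x y \<longrightarrow> y = x)"

definition is_minimal_pt :: "'a topology \<Rightarrow> 'a \<Rightarrow> bool" where
  "is_minimal_pt X x \<longleftrightarrow> x \<in> topspace X \<and> (\<forall>y. spec_le X y x \<longrightarrow> y = x)"

definition order_complex :: "'a topology \<Rightarrow> 'a set set" where
  "order_complex X = {c. c \<noteq> {} \<and> finite c \<and> c \<subseteq> topspace X \<and>
      (\<forall>a\<in>c. \<forall>b\<in>c. spec_le X a b \<or> spec_le X b a)}"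

definition edge_path :: "'a set set \<Rightarrow> 'a list \<Rightarrow> bool" where
  "edge_path K p \<longleftrightarrow> p \<noteq> [] \<and> (\<forall>i<length p. {p ! i} \<in> K) \<and>
     (\<forall>i. Suc i < length p \<longrightarrow> {p ! i, p ! Suc i} \<in> K)"

definition ep_move :: "'a set set \<Rightarrow> 'a list \<Rightarrow> 'a list \<Rightarrow> bool" where
  "ep_move K p q \<longleftrightarrow>
     (\<exists>xs ys u v w. p = xs @ [u, v, w] @ ys \<and> q = xs @ [u, w] @ ys \<and> {u, v, w} \<in> K) \<or>
     (\<exists>xs ys v. p = xs @ [v, v] @ ys \<and> q = xs @ [v] @ ys)"

definition ep_rel :: "'a set set \<Rightarrow> 'a list \<Rightarrow> 'a list \<Rightarrow> bool" where
  "ep_rel K p q \<longleftrightarrow> edge_path K p \<and> edge_path K q \<and> (ep_move K p q \<or> ep_move K q p)"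

definition ep_equiv :: "'a set set \<Rightarrow> 'a list \<Rightarrow> 'a list \<Rightarrow> bool" where
  "ep_equiv K = (ep_rel K)\<^sup>*\<^sup>*"

definition ep_class :: "'a set set \<Rightarrow> 'a list \<Rightarrow> 'a list set" where
  "ep_class K p = {q. ep_equiv K p q}"

definition closed_edge_path :: "'a set set \<Rightarrow> 'a \<Rightarrow> 'a list \<Rightarrow> bool" where
  "closed_edge_path K v p \<longleftrightarrow> edge_path K p \<and> hd p = v \<and> last p = v"

definition edge_path_group :: "'a set set \<Rightarrow> 'a \<Rightarrow> 'a list set monoid" where
  "edge_path_group K v =
    \<lparr> carrier = {ep_class K p | p. closed_edge_path K v p},
      monoid.mult = (\<lambda>c d. ep_class K ((SOME p. p \<in> c) @ tl (SOME q. q \<in> d))),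
      one = ep_class K [v] \<rparr>"

definition induced_incl :: "'a set set \<Rightarrow> 'a list set \<Rightarrow> 'a list set" where
  "induced_incl K c = ep_class K (SOME p. p \<in> c)"

end

theory Submission
  imports Defs
begin


lemma edge_path_succ:
  "edge_path K p \<longleftrightarrow> p \<noteq> [] \<and> (\<forall>a\<in>set p. {a} \<in> K) \<and> successively (\<lambda>a b. {a,b} \<in> K) p"
  unfolding edge_path_def successively_conv_nth by (auto simp: in_set_conv_nth) (use nth_mem in blast)

lemma ep_move_hd_last:
  assumes "ep_move K p q" shows "hd p = hd q \<and> last p = last q"
  using assms unfolding ep_move_def
  by (auto simp: hd_append last_append)

lemma ep_move_mono: "K \<subseteq> L \<Longrightarrow> ep_move K p q \<Longrightarrow> ep_move L p q"
  unfolding ep_move_def by blast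

lemma edge_path_mono: "K \<subseteq> L \<Longrightarrow> edge_path K p \<Longrightarrow> edge_path L p"
  unfolding edge_path_def by blast

lemma ep_equiv_mono: assumes "K \<subseteq> L" "ep_equiv K p q" shows "ep_equiv L p q"
proof -
  have "ep_rel K \<le> ep_rel L" using assms(1) edge_path_mono ep_move_mono unfolding ep_rel_def by blast
  then show ?thesis using assms(2) rtranclp_mono unfolding ep_equiv_def by blast
qed

lemma ep_equiv_sym: assumes "ep_equiv K p q" shows "ep_equiv K q p"
  using assms unfolding ep_equiv_def
proof (induction rule: rtranclp_induct)
  case base then show ?case by simp
next
  case (step y z)
  have "ep_rel K z y" using step(2) unfolding ep_rel_def by blast
  then show ?case using step(3) by (meson converse_rtranclp_into_rtranclp)
qed

lemma ep_equiv_trans: "ep_equiv K p q \<Longrightarrow> ep_equiv K q r \<Longrightarrow> ep_equiv K p r"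
  unfolding ep_equiv_def by simp

lemma ep_equiv_refl: "ep_equiv K p p"
  unfolding ep_equiv_def by simp

lemma ep_class_eq: "ep_equiv K p q \<Longrightarrow> ep_class K p = ep_class K q"
  unfolding ep_class_def using ep_equiv_trans ep_equiv_sym by blast

lemma ep_equiv_inv:
  assumes "ep_equiv K a y" "edge_path K a" shows "edge_path K y \<and> hd y = hd a \<and> last y = last a"
  using assms(1,2) unfolding ep_equiv_def
proof (induction rule: rtranclp_induct)
  case base then show ?case by simp
next
  case (step y z)
  then show ?case unfolding ep_rel_def using ep_move_hd_last by metis
qed

lemma ep_equiv_closed:
  assumes "ep_equiv K p q" "closed_edge_path K v p" shows "closed_edge_path K v q"
  using assms ep_equiv_inv unfolding closed_edge_path_def by metis

lemma edge_path_replace: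
  assumes "edge_path K a" "edge_path K b" "hd a = hd b" "last a = last b" "edge_path K (l@a@r)"
  shows "edge_path K (l@b@r)"
  using assms unfolding edge_path_succ
  by (auto simp: successively_append_iff)

lemma ep_move_lift: "ep_move K a b \<Longrightarrow> ep_move K (l@a@r) (l@b@r)"
  unfolding ep_move_def
  apply (elim disjE exE conjE)
  subgoal for xs ys u v w apply (rule disjI1) apply (rule exI[of _ "l@xs"], rule exI[of _ "ys@r"]) by auto
  subgoal for xs ys v apply (rule disjI2) apply (rule exI[of _ "l@xs"], rule exI[of _ "ys@r"]) by auto
  done

lemma ep_equiv_lift:
  assumes "ep_equiv K a b" "edge_path K a" "edge_path K (l@a@r)"
  shows "ep_equiv K (l@a@r) (l@b@r)"
  using assms(1) unfolding ep_equiv_def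
proof (induction rule: rtranclp_induct)
  case base then show ?case by simp
next
  case (step y z)
  have y: "edge_path K y \<and> hd y = hd a \<and> last y = last a" using step(1) assms(2) ep_equiv_inv unfolding ep_equiv_def by blast
  have ey: "edge_path K (l@y@r)" using edge_path_replace[OF assms(2) _ _ _ assms(3)] y by metis
  have z: "edge_path K z" "ep_move K y z \<or> ep_move K z y" using step(2) unfolding ep_rel_def by auto
  have hz: "hd z = hd y" "last z = last y" using z(2) ep_move_hd_last by metis+
  have ez: "edge_path K (l@z@r)" using edge_path_replace[OF _ z(1) _ _ ey] y hz by metis
  have "ep_rel K (l@y@r) (l@z@r)" unfolding ep_rel_def using ey ez z(2) ep_move_lift by blast
  then show ?case using step(3) by simp
qed

lemma edge_path_sub: "edge_path K (l@a@r) \<Longrightarrow> a \<noteq> [] \<Longrightarrow> edge_path K a"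
  unfolding edge_path_succ by (auto simp: successively_append_iff)

lemma ep_equiv_dup:
  assumes "edge_path K p" "edge_path K q" "last p = hd q"
  shows "ep_equiv K (p@q) (p@tl q)"
proof -
  obtain v where v: "v = last p" by simp
  have p: "p = butlast p @ [v]" using assms(1) v unfolding edge_path_def by simp
  have q: "q = v # tl q" using assms(2,3) v unfolding edge_path_def by (cases q) auto
  have e1: "p @ q = butlast p @ [v,v] @ tl q" using p q by (metis append_Cons append_assoc append_Nil)
  have e2: "p @ tl q = butlast p @ [v] @ tl q" using p by (metis append_assoc)
  have m: "ep_move K (p@q) (p@tl q)" unfolding ep_move_def using e1 e2 by blast
  have ep1: "edge_path K (p@q)" using assms unfolding edge_path_succ
    by (auto simp: successively_append_iff)
  have ep2: "edge_path K (p@tl q)"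
  proof (cases "tl q = []")
    case True then show ?thesis using assms by simp
  next
    case False
    have "edge_path K (tl q)" using edge_path_sub[of K "[v]" "tl q" "[]"] assms(2) q False by simp
    moreover have "{v, hd (tl q)} \<in> K" using assms(2) q False unfolding edge_path_succ
      by (metis list.collapse successively.simps(3))
    ultimately show ?thesis using assms(1) v False unfolding edge_path_succ
      by (auto simp: successively_append_iff)
  qed
  show ?thesis unfolding ep_equiv_def ep_rel_def using m ep1 ep2 by blast
qed

lemma ep_equiv_concat:
  assumes "ep_equiv K p1 p2" "ep_equiv K q1 q2" "edge_path K p1" "edge_path K q1" "last p1 = hd q1"
  shows "ep_equiv K (p1 @ tl q1) (p2 @ tl q2)"
proof -
  have ip: "edge_path K p2 \<and> hd p2 = hd p1 \<and> last p2 = last p1" using ep_equiv_inv assms by blast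
  have iq: "edge_path K q2 \<and> hd q2 = hd q1 \<and> last q2 = last q1" using ep_equiv_inv assms by blast
  have e1: "edge_path K (p1 @ q1)" using assms unfolding edge_path_succ
    by (auto simp: successively_append_iff)
  have e2: "edge_path K (p2 @ q1)" using edge_path_replace[of K p1 p2 "[]" q1] e1 ip assms by simp
  have "ep_equiv K (p1 @ tl q1) (p1 @ q1)" using ep_equiv_dup ep_equiv_sym assms by blast
  moreover have "ep_equiv K (p1 @ q1) (p2 @ q1)" using ep_equiv_lift[of K p1 p2 "[]" q1] assms e1 by simp
  moreover have "ep_equiv K (p2 @ q1) (p2 @ q2)" using ep_equiv_lift[of K q1 q2 p2 "[]"] assms e2 by simp
  moreover have "ep_equiv K (p2 @ q2) (p2 @ tl q2)" using ep_equiv_dup ip iq assms by metis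
  ultimately show ?thesis using ep_equiv_trans by metis
qed

lemma avoid_gen:
  assumes H: "\<And>u w. edge_path K [u,x,w] \<Longrightarrow> u \<noteq> x \<Longrightarrow> w \<noteq> x \<Longrightarrow> \<exists>m. ep_equiv K [u,x,w] m \<and> x \<notin> set m"
  shows "edge_path K p \<Longrightarrow> hd p \<noteq> x \<Longrightarrow> last p \<noteq> x \<Longrightarrow> \<exists>q. ep_equiv K p q \<and> x \<notin> set q"
proof (induction "count_list p x" arbitrary: p rule: less_induct)
  case less
  show ?case
  proof (cases "x \<in> set p")
    case False then show ?thesis using ep_equiv_refl by blast
  next
    case True
    then obtain xs ys where p: "p = xs @ x # ys" by (meson split_list)
    have xs: "xs \<noteq> []" using p less.prems by auto
    have ys: "ys \<noteq> []" using p less.prems by auto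
    have "\<exists>p'. ep_equiv K p p' \<and> count_list p' x < count_list p x"
    proof (cases "hd ys = x")
      case True
      have p2: "p = xs @ [x,x] @ tl ys" using p ys True by (cases ys) auto
      let ?p' = "xs @ [x] @ tl ys"
      have "ep_move K p ?p'" unfolding ep_move_def using p2 by blast
      moreover have "edge_path K ?p'"
        using edge_path_replace[of K "[x,x]" "[x]" xs "tl ys"] edge_path_sub[of K xs "[x,x]" "tl ys"] p2 less.prems
        unfolding edge_path_succ by auto
      ultimately have "ep_equiv K p ?p'" unfolding ep_equiv_def ep_rel_def using less.prems by blast
      moreover have "count_list ?p' x < count_list p x" using p2 by simp
      ultimately show ?thesis by blast
    next
      case hx: False
      show ?thesis
      proof (cases "last xs = x")
        case True
        have p2: "p = butlast xs @ [x,x] @ ys" using p xs True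
          by (metis append_Cons append_assoc append_Nil append_butlast_last_id)
        let ?p' = "butlast xs @ [x] @ ys"
        have "ep_move K p ?p'" unfolding ep_move_def using p2 by blast
        moreover have "edge_path K ?p'"
          using edge_path_replace[of K "[x,x]" "[x]" "butlast xs" ys] edge_path_sub[of K "butlast xs" "[x,x]" ys] p2 less.prems
          unfolding edge_path_succ by auto
        ultimately have "ep_equiv K p ?p'" unfolding ep_equiv_def ep_rel_def using less.prems by blast
        moreover have "count_list ?p' x < count_list p x" using p2 by simp
        ultimately show ?thesis by blast
      next
        case False
        have p2: "p = butlast xs @ [last xs, x, hd ys] @ tl ys" using p xs ys
          by (metis append_Cons append_assoc append_Nil append_butlast_last_id list.collapse)
        have e: "edge_path K [last xs, x, hd ys]" using edge_path_sub p2 less.prems by (metis list.distinct(1))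
        obtain m where m: "ep_equiv K [last xs, x, hd ys] m" "x \<notin> set m" using H[OF e False hx] by blast
        let ?p' = "butlast xs @ m @ tl ys"
        have "ep_equiv K p ?p'" using ep_equiv_lift[OF m(1) e] p2 less.prems by metis
        moreover have "count_list ?p' x < count_list p x" using p2 m(2) False hx
          by (simp add: count_list_0_iff)
        ultimately show ?thesis by blast
      qed
    qed
    then obtain p' where p': "ep_equiv K p p'" "count_list p' x < count_list p x" by blast
    have "edge_path K p' \<and> hd p' = hd p \<and> last p' = last p" using ep_equiv_inv p' less.prems by blast
    then obtain q where "ep_equiv K p' q" "x \<notin> set q" using less.hyps[OF p'(2)] less.prems by metis
    then show ?thesis using p' ep_equiv_trans by blast
  qed
qed


lemma spec_le_trans: "spec_le X a b \<Longrightarrow> spec_le X b c \<Longrightarrow> spec_le X a c"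
  unfolding spec_le_def by blast

lemma spec_le_refl: "a \<in> topspace X \<Longrightarrow> spec_le X a a"
  unfolding spec_le_def by blast

lemma spec_le_sub:
  assumes "S \<subseteq> topspace X"
  shows "spec_le (subtopology X S) a b \<longleftrightarrow> a \<in> S \<and> b \<in> S \<and> spec_le X a b"
  unfolding spec_le_def openin_subtopology using assms by auto

lemma order_complex_sub:
  "order_complex (subtopology X (topspace X - {x})) = {c \<in> order_complex X. x \<notin> c}"
  unfolding order_complex_def using spec_le_sub[of "topspace X - {x}" X]
  by auto


lemma spec_le_top: "spec_le X p q \<Longrightarrow> p \<in> topspace X \<and> q \<in> topspace X"
  unfolding spec_le_def by blast
lemma oc_pair: "{p,q} \<in> order_complex X \<Longrightarrow> spec_le X p q \<or> spec_le X q p"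
  unfolding order_complex_def by blast
lemma oc_sub: assumes c: "c \<in> order_complex X" and d: "d \<subseteq> c" "d \<noteq> {}" shows "d \<in> order_complex X"
proof -
  have "finite c" "c \<subseteq> topspace X" "\<forall>a\<in>c. \<forall>b\<in>c. spec_le X a b \<or> spec_le X b a"
    using c unfolding order_complex_def by simp_all
  then have "finite d" "d \<subseteq> topspace X" "\<forall>a\<in>d. \<forall>b\<in>d. spec_le X a b \<or> spec_le X b a"
    using d finite_subset by blast+
  then show ?thesis using d unfolding order_complex_def by simp
qed

lemma ep3: "edge_path K [u,x,w] \<Longrightarrow> {u,x} \<in> K \<and> {x,w} \<in> K"
  unfolding edge_path_succ by auto
lemma oc_trip: assumes h: "spec_le X p q" "spec_le X q r" shows "{p,q,r} \<in> order_complex X"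
proof -
  have pr: "spec_le X p r" using spec_le_trans[OF h] .
  have t: "p \<in> topspace X" "q \<in> topspace X" "r \<in> topspace X" using spec_le_top[OF h(1)] spec_le_top[OF h(2)] by simp_all
  have rf: "spec_le X p p" "spec_le X q q" "spec_le X r r" using t by (simp_all add: spec_le_refl)
  have c1: "{p,q,r} \<noteq> {}" "finite {p,q,r}" by simp_all
  have c2: "{p,q,r} \<subseteq> topspace X" using t by simp
  have c3: "\<forall>a\<in>{p,q,r}. \<forall>b\<in>{p,q,r}. spec_le X a b \<or> spec_le X b a" using h pr rf by simp
  show ?thesis unfolding order_complex_def mem_Collect_eq using c1 c2 c3 by (intro conjI)
qed

lemma direct_move:
  assumes e: "edge_path K [u,x,w]" and t: "{u,x,w} \<in> K" and K: "\<And>d. d \<subseteq> {u,x,w} \<Longrightarrow> d \<noteq> {} \<Longrightarrow> d \<in> K"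
  shows "ep_equiv K [u,x,w] [u,w]"
proof -
  have "{u} \<in> K" "{w} \<in> K" "{u,w} \<in> K" using K by auto
  then have "edge_path K [u,w]" unfolding edge_path_succ by auto
  moreover have "ep_move K [u,x,w] [u,w]" unfolding ep_move_def
    apply (rule disjI1) apply (rule exI[of _ "[]"], rule exI[of _ "[]"], rule exI[of _ u], rule exI[of _ x], rule exI[of _ w]) using t by simp
  ultimately have "ep_rel K [u,x,w] [u,w]" unfolding ep_rel_def using e by blast
  then show ?thesis unfolding ep_equiv_def by auto
qed

lemma detour_move:
  assumes e: "edge_path K [u,x,w]" and c1: "{u,c,x} \<in> K" and c2: "{c,x,w} \<in> K"
    and K1: "\<And>d. d \<subseteq> {u,c,x} \<Longrightarrow> d \<noteq> {} \<Longrightarrow> d \<in> K"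
    and K2: "\<And>d. d \<subseteq> {c,x,w} \<Longrightarrow> d \<noteq> {} \<Longrightarrow> d \<in> K"
  shows "ep_equiv K [u,x,w] [u,c,w]"
proof -
  have cs: "{c} \<in> K" "{u,c} \<in> K" "{c,x} \<in> K" "{c,w} \<in> K" "{u} \<in> K" "{w} \<in> K" "{x} \<in> K" "{x,w} \<in> K"
    using K1 K2 by auto
  have e1: "edge_path K [u,c,x,w]" using cs unfolding edge_path_succ by auto
  have e2: "edge_path K [u,c,w]" using cs unfolding edge_path_succ by auto
  have m1: "ep_move K [u,c,x,w] [u,x,w]" unfolding ep_move_def
    apply (rule disjI1) apply (rule exI[of _ "[]"], rule exI[of _ "[w]"], rule exI[of _ u], rule exI[of _ c], rule exI[of _ x]) using c1 by simp
  have m2: "ep_move K [u,c,x,w] [u,c,w]" unfolding ep_move_def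
    apply (rule disjI1) apply (rule exI[of _ "[u]"], rule exI[of _ "[]"], rule exI[of _ c], rule exI[of _ x], rule exI[of _ w]) using c2 by simp
  have "ep_rel K [u,x,w] [u,c,x,w]" "ep_rel K [u,c,x,w] [u,c,w]"
    unfolding ep_rel_def using e e1 e2 m1 m2 by auto
  then show ?thesis unfolding ep_equiv_def by auto
qed

lemma avoid_concrete:
  assumes "\<not> is_maximal_pt X x" "\<not> is_minimal_pt X x" "x \<in> topspace X"
    and e: "edge_path (order_complex X) [u,x,w]" and ne: "u \<noteq> x" "w \<noteq> x"
  shows "\<exists>m. ep_equiv (order_complex X) [u,x,w] m \<and> x \<notin> set m"
proof -
  let ?K = "order_complex X"
  obtain a where a: "spec_le X a x" "a \<noteq> x" using assms(1,2,3) unfolding is_minimal_pt_def by blast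
  obtain b where b: "spec_le X x b" "b \<noteq> x" using assms(1,2,3) unfolding is_maximal_pt_def by blast
  have u: "spec_le X u x \<or> spec_le X x u" using ep3[OF e] oc_pair insert_commute by metis
  have w: "spec_le X w x \<or> spec_le X x w" using ep3[OF e] oc_pair insert_commute by metis
  show ?thesis
  proof (cases "spec_le X u x")
    case True
    show ?thesis
    proof (cases "spec_le X x w")
      case True 
      have t: "{u,x,w} \<in> ?K" using oc_trip[OF \<open>spec_le X u x\<close> True] .
      have "ep_equiv ?K [u,x,w] [u,w]" using direct_move[OF e t] oc_sub[OF t] by blast
      then show ?thesis using ne by auto
    next
      case False
      then have wx: "spec_le X w x" using w by blast
      have t1: "{u,x,b} \<in> ?K" using oc_trip[OF \<open>spec_le X u x\<close> b(1)] .
      have t2: "{w,x,b} \<in> ?K" using oc_trip[OF wx b(1)] .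
      have t1': "{u,b,x} \<in> ?K" using t1 by (simp add: insert_commute)
      have t2': "{b,x,w} \<in> ?K" using t2 by (simp add: insert_commute)
      have "ep_equiv ?K [u,x,w] [u,b,w]" using detour_move[OF e t1' t2'] oc_sub[OF t1'] oc_sub[OF t2'] by blast
      then show ?thesis using ne b by auto
    qed
  next
    case False
    then have ux': "spec_le X x u" using u by blast
    show ?thesis
    proof (cases "spec_le X w x")
      case True
      have t: "{w,x,u} \<in> ?K" using oc_trip[OF True ux'] .
      have t': "{u,x,w} \<in> ?K" using t by (simp add: insert_commute)
      have "ep_equiv ?K [u,x,w] [u,w]" using direct_move[OF e t'] oc_sub[OF t'] by blast
      then show ?thesis using ne by auto
    next
      case False
      then have xw: "spec_le X x w" using w by blast
      have t1: "{a,x,u} \<in> ?K" using oc_trip[OF a(1) ux'] .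
      have t2: "{a,x,w} \<in> ?K" using oc_trip[OF a(1) xw] .
      have t1': "{u,a,x} \<in> ?K" using t1 by (simp add: insert_commute)
      have t2': "{a,x,w} \<in> ?K" using t2 by (simp add: insert_commute)
      have "ep_equiv ?K [u,x,w] [u,a,w]" using detour_move[OF e t1' t2'] oc_sub[OF t1'] oc_sub[OF t2'] by blast
      then show ?thesis using ne a by auto
    qed
  qed
qed


lemma some_class: "ep_equiv K p (SOME q. q \<in> ep_class K p)"
proof -
  have "p \<in> ep_class K p" unfolding ep_class_def using ep_equiv_refl by simp
  then have "(SOME q. q \<in> ep_class K p) \<in> ep_class K p" by (rule someI)
  then show ?thesis unfolding ep_class_def by simp
qed

lemma induced_class: "K' \<subseteq> K \<Longrightarrow> induced_incl K (ep_class K' p) = ep_class K p"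
  unfolding induced_incl_def using some_class ep_equiv_mono ep_class_eq ep_equiv_sym by metis

lemma closed_mono: "K' \<subseteq> K \<Longrightarrow> closed_edge_path K' v p \<Longrightarrow> closed_edge_path K v p"
  unfolding closed_edge_path_def using edge_path_mono by blast

lemma edge_path_avoid:
  assumes "edge_path (order_complex X) q" "x \<notin> set q"
  shows "edge_path (order_complex (subtopology X (topspace X - {x}))) q"
  using assms nth_mem unfolding order_complex_sub edge_path_def
  by (metis (no_types, lifting) Suc_lessD empty_iff insert_iff mem_Collect_eq)

theorem mainTheorem13:
  fixes X :: "'a topology" and x0 x :: 'a
  assumes "finite (topspace X)"
    and "t0_space X"
    and "connected_space X"
    and "x0 \<in> topspace X" and "x \<in> topspace X" and "x0 \<noteq> x"
    and "\<not> is_maximal_pt X x" and "\<not> is_minimal_pt X x"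
  shows "induced_incl (order_complex X)
           \<in> epi (edge_path_group (order_complex (subtopology X (topspace X - {x}))) x0)
                 (edge_path_group (order_complex X) x0)"
proof -
  define K where "K = order_complex X"
  define K' where "K' = order_complex (subtopology X (topspace X - {x}))"
  have KK: "K' \<subseteq> K" unfolding K_def K'_def order_complex_sub by blast
  let ?h = "induced_incl K"
  have cG': "carrier (edge_path_group K' x0) = {ep_class K' p | p. closed_edge_path K' x0 p}"
    unfolding edge_path_group_def by simp
  have cG: "carrier (edge_path_group K x0) = {ep_class K p | p. closed_edge_path K x0 p}"
    unfolding edge_path_group_def by simp
  have mul: "\<And>L c d. c \<otimes>\<^bsub>edge_path_group L x0\<^esub> d = ep_class L ((SOME p. p \<in> c) @ tl (SOME q. q \<in> d))"
    unfolding edge_path_group_def by simp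
  have maps: "?h \<in> carrier (edge_path_group K' x0) \<rightarrow> carrier (edge_path_group K x0)"
  proof (rule Pi_I)
    fix c assume "c \<in> carrier (edge_path_group K' x0)"
    then obtain p where p: "c = ep_class K' p" "closed_edge_path K' x0 p" unfolding cG' by blast
    have "?h c = ep_class K p" using p(1) induced_class[OF KK] by simp
    moreover have "closed_edge_path K x0 p" using closed_mono[OF KK p(2)] .
    ultimately show "?h c \<in> carrier (edge_path_group K x0)" unfolding cG by blast
  qed
  have hmul: "?h (c \<otimes>\<^bsub>edge_path_group K' x0\<^esub> d) = ?h c \<otimes>\<^bsub>edge_path_group K x0\<^esub> ?h d"
    if c: "c \<in> carrier (edge_path_group K' x0)" and d: "d \<in> carrier (edge_path_group K' x0)" for c d
  proof -
    obtain p where p: "c = ep_class K' p" "closed_edge_path K' x0 p" using c unfolding cG' by blast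
    obtain q where q: "d = ep_class K' q" "closed_edge_path K' x0 q" using d unfolding cG' by blast
    define p' where "p' = (SOME r. r \<in> c)"
    define q' where "q' = (SOME r. r \<in> d)"
    have pp': "ep_equiv K' p p'" unfolding p'_def p using some_class by blast
    have qq': "ep_equiv K' q q'" unfolding q'_def q using some_class by blast
    define p'' where "p'' = (SOME r. r \<in> ep_class K p)"
    define q'' where "q'' = (SOME r. r \<in> ep_class K q)"
    have pp'': "ep_equiv K p p''" unfolding p''_def using some_class by blast
    have qq'': "ep_equiv K q q''" unfolding q''_def using some_class by blast
    have cp': "closed_edge_path K x0 p'" using ep_equiv_closed[OF pp' p(2)] closed_mono[OF KK] by blast
    have cq': "closed_edge_path K x0 q'" using ep_equiv_closed[OF qq' q(2)] closed_mono[OF KK] by blast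
    have e1: "ep_equiv K p' p''" using ep_equiv_mono[OF KK pp'] pp'' ep_equiv_sym ep_equiv_trans by metis
    have e2: "ep_equiv K q' q''" using ep_equiv_mono[OF KK qq'] qq'' ep_equiv_sym ep_equiv_trans by metis
    have "ep_equiv K (p' @ tl q') (p'' @ tl q'')"
      using ep_equiv_concat[OF e1 e2] cp' cq' unfolding closed_edge_path_def by auto
    moreover have "?h (c \<otimes>\<^bsub>edge_path_group K' x0\<^esub> d) = ep_class K (p' @ tl q')"
      unfolding mul p'_def q'_def using induced_class[OF KK] by blast
    moreover have "?h c \<otimes>\<^bsub>edge_path_group K x0\<^esub> ?h d = ep_class K (p'' @ tl q'')"
      unfolding mul p''_def q''_def p q induced_class[OF KK] by blast
    ultimately show ?thesis using ep_class_eq by metis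
  qed
  have surj: "carrier (edge_path_group K x0) \<subseteq> ?h ` carrier (edge_path_group K' x0)"
  proof
    fix c assume "c \<in> carrier (edge_path_group K x0)"
    then obtain p where p: "c = ep_class K p" "closed_edge_path K x0 p" unfolding cG by blast
    have H: "\<And>u w. edge_path K [u,x,w] \<Longrightarrow> u \<noteq> x \<Longrightarrow> w \<noteq> x \<Longrightarrow> \<exists>m. ep_equiv K [u,x,w] m \<and> x \<notin> set m"
      unfolding K_def by (rule avoid_concrete[OF assms(7) assms(8) assms(5)])
    have pe: "edge_path K p" "hd p \<noteq> x" "last p \<noteq> x" using p(2) assms(6) unfolding closed_edge_path_def by auto
    obtain q where q: "ep_equiv K p q" "x \<notin> set q"
      using avoid_gen[OF H pe] by blast
    have cq: "closed_edge_path K x0 q" using ep_equiv_closed[OF q(1) p(2)] .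
    have "edge_path K' q" using cq edge_path_avoid[of X q x] q(2) unfolding closed_edge_path_def K_def K'_def by simp
    then have "closed_edge_path K' x0 q" using cq unfolding closed_edge_path_def by simp
    then have "ep_class K' q \<in> carrier (edge_path_group K' x0)" unfolding cG' by blast
    moreover have "?h (ep_class K' q) = c"
    proof -
      have "?h (ep_class K' q) = ep_class K q" using induced_class[OF KK] by simp
      also have "\<dots> = ep_class K p" using ep_class_eq[OF ep_equiv_sym[OF q(1)]] .
      finally show ?thesis using p(1) by simp
    qed
    ultimately show "c \<in> ?h ` carrier (edge_path_group K' x0)" by blast
  qed
  have "?h ` carrier (edge_path_group K' x0) = carrier (edge_path_group K x0)"
    using maps surj by blast
  moreover have "?h \<in> hom (edge_path_group K' x0) (edge_path_group K x0)"
    unfolding hom_def using maps hmul by simp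
  ultimately have "?h \<in> epi (edge_path_group K' x0) (edge_path_group K x0)"
    unfolding epi_def by simp
  then show ?thesis unfolding K_def K'_def .
qed
end
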